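(* Let $p\in R=A[t;\sigma,\delta]$ be monic of degree $n>1$, with companion matrix $C(p)\in M_n(A)$, and regard $R\subseteq M_n(A)[t;\sigma,\delta]$. The following are equivalent: (i) $t\in\mathrm{Idl}(Rp)$, i.e. $pt\in Rp$; (ii) for every $f\in R$: $f\in Rp$ if and only if $f(C(p))=0$; (iii) $p(C(p))=0$.
   Context: $A$ is a ring with $1$, $\sigma$ a unital ring endomorphism, $\delta$ a $\sigma$-derivation ($\delta$ additive, $\delta(ab)=\sigma(a)\delta(b)+\delta(a)b$); $R=A[t;\sigma,\delta]$ is the Ore extension with $ta=\sigma(a)t+\delta(a)$. $\sigma$ and $\delta$ are extended entrywise to $M_n(A)$, giving an endomorphism and a $\sigma$-derivation of $M_n(A)$, and $M_n(A)[t;\sigma,\delta]$ is the corresponding Ore extension; $A$ is embedded in $M_n(A)$ as scalar matrices, so $R\subseteq M_n(A)[t;\sigma,\delta]$. For a ring $S$ with $\sigma,\delta$, $f\in S[t;\sigma,\delta]$ and $c\in S$, $f(c)$ is the unique element of $S$ with $f-f(c)\in S[t;\sigma,\delta](t-c)$. For monic $p=t^n+a_{n-1}t^{n-1}+\dots+a_0$, $C(p)$ is its companion matrix (ones on the superdiagonal, last row $(-a_0,\dots,-a_{n-1})$, zeros elsewhere). $\mathrm{Idl}(Rp)=\{g\in R\mid pg\in Rp\}$. *)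

theory Defs
  imports "HOL-Analysis.Finite_Cartesian_Product" "HOL-Computational_Algebra.Polynomial"
begin

text \<open>Ore extensions S[t;sigma,delta] over a ring S whose multiplication is passed
explicitly as mul (so that both A, with its own product, and M_n(A) = 'a^'n^'n, with
matrix product, can be used).  An element sum_i a_i t^i is represented by the
coefficient polynomial with coeff i = a_i (the type 'a poly is only used as a
container for coefficients; its own multiplication is never used).\<close>

text \<open>Left multiplication by t: t * (c t^k) = sigma(c) t^(k+1) + delta(c) t^k.\<close>
definition ore_tmul :: "('a::comm_monoid_add \<Rightarrow> 'a) \<Rightarrow> ('a \<Rightarrow> 'a) \<Rightarrow> 'a poly \<Rightarrow> 'a poly" where
  "ore_tmul \<sigma> \<delta> h = pCons 0 (map_poly \<sigma> h) + map_poly \<delta> h"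

text \<open>Ore product: (sum a_i t^i)(sum b_j t^j) = sum_{i,j} a_i (t^i b_j) t^j.\<close>
definition ore_mult :: "('a::comm_monoid_add \<Rightarrow> 'a \<Rightarrow> 'a) \<Rightarrow> ('a \<Rightarrow> 'a) \<Rightarrow> ('a \<Rightarrow> 'a)
    \<Rightarrow> 'a poly \<Rightarrow> 'a poly \<Rightarrow> 'a poly" where
  "ore_mult mul \<sigma> \<delta> f g =
     (\<Sum>i\<le>degree f. \<Sum>j\<le>degree g.
        map_poly (mul (coeff f i)) ((pCons 0 ^^ j) ((ore_tmul \<sigma> \<delta> ^^ i) [:coeff g j:])))"

text \<open>Left ideal S[t] p.\<close>
definition ore_left_ideal :: "('a::comm_monoid_add \<Rightarrow> 'a \<Rightarrow> 'a) \<Rightarrow> ('a \<Rightarrow> 'a) \<Rightarrow> ('a \<Rightarrow> 'a)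
    \<Rightarrow> 'a poly \<Rightarrow> 'a poly set" where
  "ore_left_ideal mul \<sigma> \<delta> p = {ore_mult mul \<sigma> \<delta> q p | q. True}"

text \<open>Idealizer Idl(Rp) = {g. p g \<in> Rp}.\<close>
definition ore_Idl :: "('a::comm_monoid_add \<Rightarrow> 'a \<Rightarrow> 'a) \<Rightarrow> ('a \<Rightarrow> 'a) \<Rightarrow> ('a \<Rightarrow> 'a)
    \<Rightarrow> 'a poly \<Rightarrow> 'a poly set" where
  "ore_Idl mul \<sigma> \<delta> p = {g. ore_mult mul \<sigma> \<delta> p g \<in> ore_left_ideal mul \<sigma> \<delta> p}"

text \<open>Evaluation f(c): the unique r in S with f - r \<in> S[t;sigma,delta](t - c).\<close>
definition ore_eval :: "('a::ab_group_add \<Rightarrow> 'a \<Rightarrow> 'a) \<Rightarrow> 'a \<Rightarrow> ('a \<Rightarrow> 'a) \<Rightarrow> ('a \<Rightarrow> 'a)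
    \<Rightarrow> 'a poly \<Rightarrow> 'a \<Rightarrow> 'a" where
  "ore_eval mul one \<sigma> \<delta> f c =
     (THE r. \<exists>q. f - [:r:] = ore_mult mul \<sigma> \<delta> q [:- c, one:])"

text \<open>Entrywise extension of a map to square matrices.\<close>
definition entrywise :: "('a \<Rightarrow> 'a) \<Rightarrow> 'a^'n::finite^'n \<Rightarrow> 'a^'n^'n" where
  "entrywise g X = (\<chi> i j. g (X $ i $ j))"

text \<open>Position (0-based) of an index in the linearly ordered finite index type.\<close>
definition idx :: "'n::{finite,linorder} \<Rightarrow> nat" where
  "idx i = card {j. j < i}"

text \<open>Companion matrix: ones on the superdiagonal, last row (-a_0,...,-a_{n-1}).\<close>
definition companion :: "'a::ring_1 poly \<Rightarrow> 'a^('n::{finite,linorder})^('n::{finite,linorder})" where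
  "companion p = (\<chi> i j.
     if idx i + 1 < card (UNIV :: 'n::{finite,linorder} set) then (if idx j = idx i + 1 then 1 else 0)
     else - coeff p (idx j))"

end

theory Submission imports Defs begin


locale ore =
  fixes mul :: "'a::ab_group_add \<Rightarrow> 'a \<Rightarrow> 'a" and one :: 'a and \<sigma> \<delta> :: "'a \<Rightarrow> 'a"
  assumes massoc: "mul a (mul b c) = mul (mul a b) c"
  and mone_l: "mul one a = a" and mone_r: "mul a one = a"
  and mdl: "mul a (b + c) = mul a b + mul a c"
  and mdr: "mul (a + b) c = mul a c + mul b c"
  and one_nz: "one \<noteq> 0"
  and s_add: "\<sigma> (a + b) = \<sigma> a + \<sigma> b"
  and s_mul: "\<sigma> (mul a b) = mul (\<sigma> a) (\<sigma> b)"
  and s_one: "\<sigma> one = one"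
  and d_add: "\<delta> (a + b) = \<delta> a + \<delta> b"
  and d_mul: "\<delta> (mul a b) = mul (\<sigma> a) (\<delta> b) + mul (\<delta> a) b"
begin

lemma m0l[simp]: "mul 0 a = 0" using mdr[of 0 0 a] by simp
lemma m0r[simp]: "mul a 0 = 0" using mdl[of a 0 0] by simp
lemma s0[simp]: "\<sigma> 0 = 0" using s_add[of 0 0] by simp
lemma d0[simp]: "\<delta> 0 = 0" using d_add[of 0 0] by simp
lemma d_one[simp]: "\<delta> one = 0" using d_mul[of one one] by (simp add: mone_l mone_r s_one)
lemma mnegl: "mul (- a) b = - mul a b"
proof -
  have "mul (- a) b + mul a b = 0" using mdr[of "-a" a b] by simp
  then show ?thesis by (rule eq_neg_iff_add_eq_0[THEN iffD2])
qed
lemma mnegr: "mul a (- b) = - mul a b"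
proof -
  have "mul a (- b) + mul a b = 0" using mdl[of a "-b" b] by simp
  then show ?thesis by (rule eq_neg_iff_add_eq_0[THEN iffD2])
qed
lemma s_neg: "\<sigma> (- a) = - \<sigma> a"
proof -
  have "\<sigma> (- a) + \<sigma> a = 0" using s_add[of "-a" a] by simp
  then show ?thesis by (rule eq_neg_iff_add_eq_0[THEN iffD2])
qed
lemma d_neg: "\<delta> (- a) = - \<delta> a"
proof -
  have "\<delta> (- a) + \<delta> a = 0" using d_add[of "-a" a] by simp
  then show ?thesis by (rule eq_neg_iff_add_eq_0[THEN iffD2])
qed
lemma s_diff: "\<sigma> (a - b) = \<sigma> a - \<sigma> b" by (simp only: diff_conv_add_uminus s_add s_neg)
lemma d_diff: "\<delta> (a - b) = \<delta> a - \<delta> b" by (simp only: diff_conv_add_uminus d_add d_neg)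
lemma mdiffl: "mul (a - b) c = mul a c - mul b c" by (simp only: diff_conv_add_uminus mdr mnegl)
lemma mdiffr: "mul a (b - c) = mul a b - mul a c" by (simp only: diff_conv_add_uminus mdl mnegr)
lemma msuml: "mul (sum f S) c = (\<Sum>x\<in>S. mul (f x) c)"
  by (induction S rule: infinite_finite_induct) (auto simp: mdr)
lemma msumr: "mul c (sum f S) = (\<Sum>x\<in>S. mul c (f x))"
  by (induction S rule: infinite_finite_induct) (auto simp: mdl)
lemma s_sum: "\<sigma> (sum f S) = (\<Sum>x\<in>S. \<sigma> (f x))"
  by (induction S rule: infinite_finite_induct) (auto simp: s_add)
lemma d_sum: "\<delta> (sum f S) = (\<Sum>x\<in>S. \<delta> (f x))"
  by (induction S rule: infinite_finite_induct) (auto simp: d_add)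

definition sm :: "'a \<Rightarrow> 'a poly \<Rightarrow> 'a poly" where "sm a h = map_poly (mul a) h"
abbreviation T where "T \<equiv> ore_tmul \<sigma> \<delta>"
abbreviation M where "M \<equiv> ore_mult mul \<sigma> \<delta>"

lemma coeff_sm[simp]: "coeff (sm a h) k = mul a (coeff h k)"
  by (simp add: sm_def coeff_map_poly)
lemma coeff_T: "coeff (T h) k = (case k of 0 \<Rightarrow> 0 | Suc k' \<Rightarrow> \<sigma> (coeff h k')) + \<delta> (coeff h k)"
  by (simp add: ore_tmul_def coeff_map_poly coeff_pCons split: nat.splits)

lemma T_add: "T (x + y) = T x + T y"
  by (rule poly_eqI) (simp add: coeff_T s_add d_add split: nat.splits)
lemma T_0[simp]: "T 0 = 0"
  by (rule poly_eqI) (simp add: coeff_T split: nat.splits)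
lemma T_neg: "T (- x) = - T x"
  by (rule poly_eqI) (simp add: coeff_T s_neg d_neg split: nat.splits)
lemma T_diff: "T (x - y) = T x - T y"
  by (simp only: diff_conv_add_uminus T_add T_neg)
lemma T_sum: "T (sum f S) = (\<Sum>x\<in>S. T (f x))"
  by (induction S rule: infinite_finite_induct) (auto simp: T_add)
lemma Ti_add: "(T^^i) (x + y) = (T^^i) x + (T^^i) y"
  by (induction i) (auto simp: T_add)
lemma Ti_0[simp]: "(T^^i) 0 = 0"
  by (induction i) auto
lemma Ti_sum: "(T^^i) (sum f S) = (\<Sum>x\<in>S. (T^^i) (f x))"
  by (induction S rule: infinite_finite_induct) (auto simp: Ti_add)
lemma T_shift: "T (pCons 0 h) = pCons 0 (T h)"
  by (rule poly_eqI) (simp add: coeff_T coeff_pCons split: nat.splits)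
lemma Ti_shift: "(T^^i) (pCons 0 h) = pCons 0 ((T^^i) h)"
  by (induction i) (auto simp: T_shift)
lemma Ti_shiftj: "(T^^i) ((pCons 0 ^^ j) h) = (pCons 0 ^^ j) ((T^^i) h)"
  by (induction j) (auto simp: Ti_shift)
lemma shiftj_monom: "(pCons 0 ^^ j) [:a:] = monom a j"
  by (induction j) (auto simp: monom_Suc monom_0)

lemma sm_add: "sm a (x + y) = sm a x + sm a y"
  by (rule poly_eqI) (simp add: mdl)
lemma sm_0[simp]: "sm a 0 = 0" by (rule poly_eqI) simp
lemma sm_0l[simp]: "sm 0 x = 0" by (rule poly_eqI) simp
lemma sm_addl: "sm (a + b) x = sm a x + sm b x"
  by (rule poly_eqI) (simp add: mdr)
lemma sm_neg: "sm a (- x) = - sm a x" by (rule poly_eqI) (simp add: mnegr)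
lemma sm_diff: "sm a (x - y) = sm a x - sm a y" by (rule poly_eqI) (simp add: mdiffr)
lemma sm_sum: "sm a (sum f S) = (\<Sum>x\<in>S. sm a (f x))"
  by (induction S rule: infinite_finite_induct) (auto simp: sm_add)
lemma sm_suml: "sm (sum f S) x = (\<Sum>i\<in>S. sm (f i) x)"
  by (induction S rule: infinite_finite_induct) (auto simp: sm_addl)
lemma sm_sm: "sm a (sm b x) = sm (mul a b) x" by (rule poly_eqI) (simp add: massoc)
lemma sm_one[simp]: "sm one x = x" by (rule poly_eqI) (simp add: mone_l)
lemma sm_pCons: "sm a (pCons b x) = pCons (mul a b) (sm a x)"
  by (rule poly_eqI) (simp add: coeff_pCons split: nat.splits)
lemma sm_const: "sm a [:b:] = [:mul a b:]"
  by (simp add: sm_pCons)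
lemma T_sm: "T (sm a h) = sm (\<sigma> a) (T h) + sm (\<delta> a) h"
  by (rule poly_eqI) (simp add: coeff_T s_mul d_mul mdl add.assoc split: nat.splits)

lemma rep: assumes "degree f < m"
  shows "M f g = (\<Sum>i<m. sm (coeff f i) ((T^^i) g))"
proof -
  have "M f g = (\<Sum>i\<le>degree f. sm (coeff f i) ((T^^i) g))"
  proof -
    have "(\<Sum>j\<le>degree g. map_poly (mul (coeff f i)) ((pCons 0 ^^ j) ((T ^^ i) [:coeff g j:])))
       = sm (coeff f i) ((T^^i) g)" for i
    proof -
      have "(\<Sum>j\<le>degree g. map_poly (mul (coeff f i)) ((pCons 0 ^^ j) ((T ^^ i) [:coeff g j:])))
         = sm (coeff f i) (\<Sum>j\<le>degree g. (T ^^ i) ((pCons 0 ^^ j) [:coeff g j:]))"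
        unfolding sm_sum Ti_shiftj by (simp add: sm_def)
      also have "\<dots> = sm (coeff f i) ((T^^i) (\<Sum>j\<le>degree g. monom (coeff g j) j))"
        by (simp add: Ti_sum shiftj_monom)
      finally show ?thesis by (simp add: poly_as_sum_of_monoms)
    qed
    then show ?thesis by (simp add: ore_mult_def)
  qed
  also have "\<dots> = (\<Sum>i<m. sm (coeff f i) ((T^^i) g))"
  proof (rule sum.mono_neutral_left)
    show "finite {..<m}" by simp
    show "{..degree f} \<subseteq> {..<m}" using assms by auto
    show "\<forall>i\<in>{..<m} - {..degree f}. sm (coeff f i) ((T ^^ i) g) = 0"
      by (auto simp: coeff_eq_0)
  qed
  finally show ?thesis .
qed


lemma rep2: assumes "\<forall>i\<ge>m. coeff f i = 0"
  shows "M f g = (\<Sum>i<m. sm (coeff f i) ((T^^i) g))"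
proof (cases "m = 0")
  case True
  then have "f = 0" using assms by (auto intro: poly_eqI)
  then show ?thesis using rep[of "0::'a poly" 1 g] True by simp
next
  case False
  have "degree f \<le> m - 1" using assms by (intro degree_le) auto
  then show ?thesis using False by (intro rep) auto
qed

lemma M_0l[simp]: "M 0 g = 0" using rep[of "0::'a poly" 1 g] by simp

lemma M_addl: "M (f + f') g = M f g + M f' g"
proof -
  define m where "m = Suc (max (degree f) (degree f'))"
  have h: "\<forall>i\<ge>m. coeff x i = 0" if "degree x < m" for x using that by (auto intro!: coeff_eq_0)
  have "degree (f + f') < m" using degree_add_le_max[of f f'] by (auto simp: m_def)
  then have "M (f + f') g = (\<Sum>i<m. sm (coeff (f+f') i) ((T^^i) g))" by (intro rep)
  also have "\<dots> = (\<Sum>i<m. sm (coeff f i) ((T^^i) g)) + (\<Sum>i<m. sm (coeff f' i) ((T^^i) g))"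
    by (simp add: sm_addl sum.distrib)
  also have "\<dots> = M f g + M f' g" by (subst (1 2) rep[of _ m]) (auto simp: m_def)
  finally show ?thesis .
qed

lemma M_negl: "M (- f) g = - M f g"
  using M_addl[of "-f" f g] by (simp add: eq_neg_iff_add_eq_0)

lemma M_diffl: "M (f - f') g = M f g - M f' g"
  by (simp only: diff_conv_add_uminus M_addl M_negl)

lemma M_suml: "M (sum F S) g = (\<Sum>x\<in>S. M (F x) g)"
  by (induction S rule: infinite_finite_induct) (auto simp: M_addl)

lemma M_addr: "M f (g + g') = M f g + M f g'"
proof -
  have "M f (g + g') = (\<Sum>i<Suc (degree f). sm (coeff f i) ((T^^i) (g + g')))" by (intro rep) auto
  also have "\<dots> = (\<Sum>i<Suc (degree f). sm (coeff f i) ((T^^i) g)) + (\<Sum>i<Suc (degree f). sm (coeff f i) ((T^^i) g'))"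
    by (simp add: Ti_add sm_add sum.distrib)
  also have "\<dots> = M f g + M f g'" by (subst (1 2) rep[of _ "Suc (degree f)"]) auto
  finally show ?thesis .
qed

lemma M_0r[simp]: "M f 0 = 0" using M_addr[of f 0 0] by simp

lemma M_negr: "M f (- g) = - M f g"
  using M_addr[of f "-g" g] by (simp add: eq_neg_iff_add_eq_0)

lemma coeff_sm_eq0: "\<forall>i\<ge>m. coeff f i = 0 \<Longrightarrow> \<forall>i\<ge>m. coeff (sm a f) i = 0" by simp

lemma M_sml: "M (sm a f) g = sm a (M f g)"
proof -
  define m where "m = Suc (degree f)"
  have h: "\<forall>i\<ge>m. coeff f i = 0" by (auto simp: m_def intro!: coeff_eq_0)
  have "M (sm a f) g = (\<Sum>i<m. sm (coeff (sm a f) i) ((T^^i) g))" by (rule rep2) (simp add: h)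
  also have "\<dots> = sm a (\<Sum>i<m. sm (coeff f i) ((T^^i) g))" by (simp add: sm_sum sm_sm)
  also have "\<dots> = sm a (M f g)" by (subst rep2[OF h]) simp
  finally show ?thesis .
qed

lemma M_T: "M (T f) g = T (M f g)"
proof -
  define m where "m = Suc (degree f)"
  have h: "\<forall>i\<ge>m. coeff f i = 0" by (auto simp: m_def intro!: coeff_eq_0)
  have h2: "\<forall>i\<ge>Suc m. coeff (T f) i = 0" using h by (auto simp: coeff_T split: nat.splits)
  have "M (T f) g = (\<Sum>i<Suc m. sm (coeff (T f) i) ((T^^i) g))" by (rule rep2[OF h2])
  also have "\<dots> = (\<Sum>i<Suc m. sm (case i of 0 \<Rightarrow> 0 | Suc k \<Rightarrow> \<sigma> (coeff f k)) ((T^^i) g))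
       + (\<Sum>i<Suc m. sm (\<delta> (coeff f i)) ((T^^i) g))"
    by (simp add: coeff_T sm_addl sum.distrib)
  also have "(\<Sum>i<Suc m. sm (case i of 0 \<Rightarrow> 0 | Suc k \<Rightarrow> \<sigma> (coeff f k)) ((T^^i) g))
      = (\<Sum>i<m. sm (\<sigma> (coeff f i)) ((T^^Suc i) g))"
    by (subst sum.lessThan_Suc_shift) simp
  also have "(\<Sum>i<Suc m. sm (\<delta> (coeff f i)) ((T^^i) g)) = (\<Sum>i<m. sm (\<delta> (coeff f i)) ((T^^i) g))"
    using h by simp
  also have "(\<Sum>i<m. sm (\<sigma> (coeff f i)) ((T^^Suc i) g)) + (\<Sum>i<m. sm (\<delta> (coeff f i)) ((T^^i) g))
      = T (\<Sum>i<m. sm (coeff f i) ((T^^i) g))"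
    by (simp add: T_sum T_sm sum.distrib)
  also have "\<dots> = T (M f g)" by (subst rep2[OF h]) simp
  finally show ?thesis .
qed

lemma M_Ti: "M ((T^^i) f) g = (T^^i) (M f g)"
  by (induction i) (auto simp: M_T)

lemma M_assoc: "M (M f g) h = M f (M g h)"
proof -
  define m where "m = Suc (degree f)"
  have h: "\<forall>i\<ge>m. coeff f i = 0" by (auto simp: m_def intro!: coeff_eq_0)
  have "M (M f g) h = (\<Sum>i<m. M (sm (coeff f i) ((T^^i) g)) h)" by (simp add: rep2[OF h] M_suml)
  also have "\<dots> = (\<Sum>i<m. sm (coeff f i) ((T^^i) (M g h)))" by (simp add: M_sml M_Ti)
  also have "\<dots> = M f (M g h)" by (simp add: rep2[OF h])
  finally show ?thesis .
qed

lemma M_const: "M [:a:] h = sm a h"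
  using rep[of "[:a:]" 1 h] by simp

lemma Ti_one: "(T^^i) [:one:] = monom one i"
proof (induction i)
  case 0 then show ?case by (simp add: monom_0)
next
  case (Suc i)
  have "T [:one:] = pCons 0 [:one:]"
    by (rule poly_eqI) (simp add: coeff_T s_one coeff_pCons split: nat.splits)
  moreover have "(T^^Suc i) [:one:] = (T^^i) (T [:one:])" by (simp only: funpow_swap1 funpow.simps o_apply)
  ultimately have "(T^^Suc i) [:one:] = (T^^i) (pCons 0 [:one:])" by simp
  also have "\<dots> = monom one (Suc i)" by (simp add: Ti_shift Suc monom_Suc)
  finally show ?case .
qed

lemma sum_sm_monom: assumes "\<forall>i\<ge>m. coeff f i = 0"
  shows "(\<Sum>i<m. sm (coeff f i) (monom one i)) = f"
proof (rule poly_eqI)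
  fix k
  have "coeff (\<Sum>i<m. sm (coeff f i) (monom one i)) k = (\<Sum>i<m. if i = k then coeff f i else 0)"
    by (simp add: coeff_sum mone_r if_distrib cong: if_cong)
  also have "\<dots> = coeff f k" using assms by (auto simp: sum.delta' not_less)
  finally show "coeff (\<Sum>i<m. sm (coeff f i) (monom one i)) k = coeff f k" .
qed

lemma M_one_r: "M f [:one:] = f"
proof -
  define m where "m = Suc (degree f)"
  have h: "\<forall>i\<ge>m. coeff f i = 0" by (auto simp: m_def intro!: coeff_eq_0)
  show ?thesis by (simp add: rep2[OF h] Ti_one sum_sm_monom[OF h])
qed

lemma pCons0_add: "pCons 0 (x + y) = pCons 0 x + pCons 0 y" by (simp add: add_pCons)
lemma pCons0_sum: "pCons 0 (sum F S) = (\<Sum>x\<in>S. pCons 0 (F x))"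
  by (induction S rule: infinite_finite_induct) (auto simp: pCons0_add)

lemma M_t_r: "M f [:0, one:] = pCons 0 f"
proof -
  define m where "m = Suc (degree f)"
  have h: "\<forall>i\<ge>m. coeff f i = 0" by (auto simp: m_def intro!: coeff_eq_0)
  have "M f [:0, one:] = (\<Sum>i<m. sm (coeff f i) (pCons 0 (monom one i)))"
    by (simp add: rep2[OF h] Ti_one Ti_shift)
  also have "\<dots> = pCons 0 (\<Sum>i<m. sm (coeff f i) (monom one i))"
    by (simp add: pCons0_sum sm_pCons)
  finally show ?thesis by (simp add: sum_sm_monom[OF h])
qed


abbreviation I where "I \<equiv> ore_left_ideal mul \<sigma> \<delta>"

lemma I_iff: "x \<in> I h \<longleftrightarrow> (\<exists>q. x = M q h)" by (simp add: ore_left_ideal_def)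
lemma I_0[simp]: "0 \<in> I h" unfolding I_iff by (rule exI[of _ 0]) simp
lemma I_self: "h \<in> I h" unfolding I_iff by (rule exI[of _ "[:one:]"]) (simp add: M_const)
lemma I_add: "x \<in> I h \<Longrightarrow> y \<in> I h \<Longrightarrow> x + y \<in> I h"
  unfolding I_iff by (metis M_addl)
lemma I_neg: "x \<in> I h \<Longrightarrow> - x \<in> I h"
  unfolding I_iff by (metis M_negl)
lemma I_diff: "x \<in> I h \<Longrightarrow> y \<in> I h \<Longrightarrow> x - y \<in> I h"
  unfolding I_iff by (metis M_diffl)
lemma I_sum: "(\<And>x. x \<in> S \<Longrightarrow> F x \<in> I h) \<Longrightarrow> sum F S \<in> I h"
  by (induction S rule: infinite_finite_induct) (auto intro: I_add)
lemma I_M: "x \<in> I h \<Longrightarrow> M g x \<in> I h"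
  unfolding I_iff by (metis M_assoc)
lemma I_sm: "x \<in> I h \<Longrightarrow> sm a x \<in> I h"
  using I_M[of x h "[:a:]"] by (simp add: M_const)
lemma I_T: "x \<in> I h \<Longrightarrow> T x \<in> I h"
  unfolding I_iff by (metis M_T)

lemma Ti_coeff: "(\<forall>k > degree h + i. coeff ((T^^i) h) k = 0) \<and> coeff ((T^^i) h) (degree h + i) = (\<sigma>^^i) (lead_coeff h)"
proof (induction i)
  case 0 then show ?case by (auto intro!: coeff_eq_0)
next
  case (Suc i)
  show ?case
  proof (intro conjI allI impI)
    fix k assume "k > degree h + Suc i"
    then show "coeff ((T^^Suc i) h) k = 0" using Suc by (auto simp: coeff_T split: nat.splits)
  next
    show "coeff ((T ^^ Suc i) h) (degree h + Suc i) = (\<sigma> ^^ Suc i) (lead_coeff h)"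
      using Suc by (simp add: coeff_T)
  qed
qed

lemma s_pow_one: "(\<sigma>^^i) one = one" by (induction i) (auto simp: s_one)

lemma M_lead: assumes "lead_coeff h = one" "q \<noteq> 0"
  shows "coeff (M q h) (degree q + degree h) = lead_coeff q"
proof -
  define m where "m = Suc (degree q)"
  have "M q h = (\<Sum>i<m. sm (coeff q i) ((T^^i) h))" by (rule rep) (simp add: m_def)
  then have "coeff (M q h) (degree q + degree h) = (\<Sum>i<m. mul (coeff q i) (coeff ((T^^i) h) (degree q + degree h)))"
    by (simp add: coeff_sum)
  also have "\<dots> = (\<Sum>i<degree q. mul (coeff q i) (coeff ((T^^i) h) (degree q + degree h)))
     + mul (lead_coeff q) (coeff ((T^^degree q) h) (degree h + degree q))"
    by (simp add: m_def add.commute)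
  also have "(\<Sum>i<degree q. mul (coeff q i) (coeff ((T^^i) h) (degree q + degree h))) = 0"
    using Ti_coeff by (intro sum.neutral) auto
  also have "coeff ((T^^degree q) h) (degree h + degree q) = one"
    using Ti_coeff[of h "degree q"] assms by (simp add: s_pow_one)
  finally show ?thesis by (simp add: mone_r)
qed

lemma small_zero: assumes "lead_coeff h = one" "x \<in> I h" "degree x < degree h"
  shows "x = 0"
proof -
  obtain q where q: "x = M q h" using assms(2) I_iff by auto
  show ?thesis
  proof (cases "q = 0")
    case True then show ?thesis using q by simp
  next
    case False
    then have "coeff x (degree q + degree h) \<noteq> 0" using M_lead[OF assms(1) False] q by simp
    then have "degree q + degree h \<le> degree x" by (rule le_degree)
    then show ?thesis using assms(3) by simp
  qed
qed

primrec Nv :: "'a \<Rightarrow> nat \<Rightarrow> 'a" where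
  "Nv c 0 = one"
| "Nv c (Suc i) = mul (\<sigma> (Nv c i)) c + \<delta> (Nv c i)"

lemma T_const: "T [:a:] = [:\<delta> a, \<sigma> a:]"
  by (rule poly_eqI) (simp add: coeff_T coeff_pCons split: nat.splits)

lemma const_sum: "(\<Sum>x\<in>S. [:g x:]) = [:sum g S:]"
  by (induction S rule: infinite_finite_induct) auto

lemma Ti_one_mod: "(T^^i) [:one:] - [:Nv c i:] \<in> I [:-c, one:]"
proof (induction i)
  case 0 then show ?case by simp
next
  case (Suc i)
  define a where "a = Nv c i"
  have e: "T [:a:] - [:Nv c (Suc i):] = M [:\<sigma> a:] [:-c, one:]"
    by (simp add: a_def T_const M_const sm_pCons mnegr mone_r)
  have "(T^^Suc i) [:one:] - [:Nv c (Suc i):] = T ((T^^i) [:one:] - [:a:]) + (T [:a:] - [:Nv c (Suc i):])"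
    by (simp add: T_diff a_def)
  also have "\<dots> \<in> I [:-c, one:]"
  proof (rule I_add[OF I_T])
    show "T [:a:] - [:Nv c (Suc i):] \<in> I [:-c, one:]" unfolding e I_iff by blast
    show "(T^^i) [:one:] - [:a:] \<in> I [:-c, one:]" using Suc by (simp add: a_def)
  qed
  finally show ?case .
qed

lemma eval_formula: assumes "\<forall>i\<ge>m. coeff f i = 0"
  shows "ore_eval mul one \<sigma> \<delta> f c = (\<Sum>i<m. mul (coeff f i) (Nv c i))"
proof -
  define r where "r = (\<Sum>i<m. mul (coeff f i) (Nv c i))"
  have lt: "lead_coeff [:-c, one:] = one" "degree [:-c, one:] = 1" using one_nz by auto
  have ex: "f - [:r:] \<in> I [:-c, one:]"
  proof -
    have "f - [:r:] = (\<Sum>i<m. sm (coeff f i) ((T^^i) [:one:])) - (\<Sum>i<m. sm (coeff f i) [:Nv c i:])"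
      using M_one_r[of f] rep2[OF assms, of "[:one:]"]
      by (simp add: r_def sm_const const_sum)
    also have "\<dots> = (\<Sum>i<m. sm (coeff f i) ((T^^i) [:one:] - [:Nv c i:]))"
      by (simp add: sm_diff sum_subtractf)
    also have "\<dots> \<in> I [:-c, one:]"
      by (intro I_sum I_sm Ti_one_mod)
    finally show ?thesis .
  qed
  have "(THE r. \<exists>q. f - [:r:] = M q [:- c, one:]) = r"
  proof (rule the_equality)
    show "\<exists>q. f - [:r:] = M q [:- c, one:]" using ex I_iff by auto
  next
    fix r' assume "\<exists>q. f - [:r':] = M q [:- c, one:]"
    then have "f - [:r':] \<in> I [:-c, one:]" using I_iff by auto
    from I_diff[OF this ex] have "[:r - r':] \<in> I [:-c, one:]" by simp
    from small_zero[OF lt(1) this] lt(2) have "[:r - r':] = 0" by simp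
    then show "r' = r" by simp
  qed
  then show ?thesis by (simp add: ore_eval_def r_def)
qed

end


lemma ore_A:
  fixes \<sigma> \<delta> :: "'a::ring_1 \<Rightarrow> 'a"
  assumes "\<sigma> 1 = 1" "\<And>x y. \<sigma> (x + y) = \<sigma> x + \<sigma> y" "\<And>x y. \<sigma> (x * y) = \<sigma> x * \<sigma> y"
      "\<And>x y. \<delta> (x + y) = \<delta> x + \<delta> y" "\<And>x y. \<delta> (x * y) = \<sigma> x * \<delta> y + \<delta> x * y"
  shows "ore (*) (1::'a) \<sigma> \<delta>"
  by unfold_locales (auto simp: assms algebra_simps)

lemma mat_one_nz: "(mat 1 :: 'a::ring_1^'n^'n) \<noteq> 0"
proof
  assume "(mat 1 :: 'a::ring_1^'n^'n) = 0"
  then have "(mat 1 :: 'a::ring_1^'n^'n) $ undefined $ undefined = 0" by simp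
  then show False by (simp add: mat_def)
qed

lemma ore_mat:
  fixes \<sigma> \<delta> :: "'a::ring_1 \<Rightarrow> 'a"
  assumes o: "ore (*) (1::'a) \<sigma> \<delta>"
  shows "ore (**) (mat 1 :: 'a^'n^'n) (entrywise \<sigma>) (entrywise \<delta>)"
proof -
  interpret A: ore "(*)" "1::'a" \<sigma> \<delta> by (rule o)
  show ?thesis
  proof (unfold_locales)
    fix a b c :: "'a^'n^'n"
    show "a ** (b ** c) = a ** b ** c" by (rule matrix_mul_assoc)
    show "mat 1 ** a = a" by simp
    show "a ** mat 1 = a" by simp
    show "a ** (b + c) = a ** b + a ** c" by (rule matrix_add_ldistrib)
    show "(a + b) ** c = a ** c + b ** c"
      by (simp add: vec_eq_iff matrix_matrix_mult_def sum.distrib ring_distribs)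
    show "mat 1 \<noteq> (0::'a^'n^'n)" by (rule mat_one_nz)
    show "entrywise \<sigma> (a + b) = entrywise \<sigma> a + entrywise \<sigma> b"
      by (simp add: vec_eq_iff entrywise_def A.s_add)
    show "entrywise \<sigma> (a ** b) = entrywise \<sigma> a ** entrywise \<sigma> b"
      by (simp add: vec_eq_iff entrywise_def matrix_matrix_mult_def A.s_sum A.s_mul)
    show "entrywise \<sigma> (mat 1) = mat 1"
      by (simp add: vec_eq_iff entrywise_def mat_def A.s_one)
    show "entrywise \<delta> (a + b) = entrywise \<delta> a + entrywise \<delta> b"
      by (simp add: vec_eq_iff entrywise_def A.d_add)
    show "entrywise \<delta> (a ** b) = entrywise \<sigma> a ** entrywise \<delta> b + entrywise \<delta> a ** b"
      by (simp add: vec_eq_iff entrywise_def matrix_matrix_mult_def A.d_sum A.d_mul sum.distrib)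
  qed
qed

lemma idx_mono: "(i::'n::{finite,linorder}) < j \<Longrightarrow> idx i < idx j"
  unfolding idx_def by (rule psubset_card_mono) auto

lemma idx_inj: "inj (idx :: 'n::{finite,linorder} \<Rightarrow> nat)"
  by (rule linorder_injI) (simp add: idx_mono less_imp_neq)

lemma idx_lt: "idx (i::'n::{finite,linorder}) < CARD('n)"
  unfolding idx_def by (rule psubset_card_mono) auto

lemma idx_bij: "bij_betw (idx :: 'n::{finite,linorder} \<Rightarrow> nat) UNIV {..<CARD('n)}"
proof -
  have "idx ` (UNIV::'n set) = {..<CARD('n)}"
  proof (rule card_subset_eq)
    show "finite {..<CARD('n)}" by simp
    show "idx ` (UNIV::'n set) \<subseteq> {..<CARD('n)}" using idx_lt by auto
    show "card (idx ` (UNIV::'n set)) = card {..<CARD('n)}"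
      using card_image[OF idx_inj] by simp
  qed
  then show ?thesis using idx_inj by (simp add: bij_betw_def)
qed

lemma idx_surj: "e < CARD('n::{finite,linorder}) \<Longrightarrow> \<exists>k::'n. idx k = e"
  using idx_bij[where 'n='n] unfolding bij_betw_def by (metis imageE lessThan_iff)

lemma sum_idx: "(\<Sum>j\<in>(UNIV::'n::{finite,linorder} set). g (idx j)) = (\<Sum>e<CARD('n). g e)"
  by (rule sum.reindex_bij_betw[OF idx_bij])



lemma mat_mul_entry: "(mat a ** X) $ k $ j = a * X $ k $ j"
proof -
  have "(mat a ** X) $ k $ j = (\<Sum>ka\<in>UNIV. (if k = ka then a else 0) * X $ ka $ j)"
    unfolding matrix_matrix_mult_def mat_def by simp
  also have "\<dots> = (\<Sum>ka\<in>UNIV. if ka = k then a * X$ka$j else 0)" by (rule sum.cong) auto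
  finally show ?thesis by simp
qed

locale cs =
  fixes \<sigma> \<delta> :: "'a::ring_1 \<Rightarrow> 'a" and p :: "'a poly" and C :: "'a^('n::{finite,linorder})^('n::{finite,linorder})"
  assumes o: "ore (*) (1::'a) \<sigma> \<delta>" and monic: "lead_coeff p = 1"
    and deg: "degree p = CARD('n)" and Cdef: "C = companion p"
begin

sublocale A: ore "(*)" "1::'a" \<sigma> \<delta> by (rule o)
sublocale MA: ore "(**)" "mat 1 :: 'a^('n::{finite,linorder})^('n::{finite,linorder})" "entrywise \<sigma>" "entrywise \<delta>" by (rule ore_mat[OF o])

definition rowp :: "'a^('n::{finite,linorder})^('n::{finite,linorder}) \<Rightarrow> 'n \<Rightarrow> 'a poly" where
  "rowp X k = (\<Sum>j\<in>UNIV. monom (X$k$j) (idx j))"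

lemma T_monom: "A.T (monom a n) = monom (\<sigma> a) (Suc n) + monom (\<delta> a) n"
  by (rule poly_eqI) (auto simp: A.coeff_T split: nat.splits)

lemma sm_monom: "A.sm a (monom b n) = monom (a * b) n"
  by (rule poly_eqI) auto

lemma coeff_rowp: "coeff (rowp X k) e = (\<Sum>j\<in>UNIV. if idx j = e then X$k$j else 0)"
  by (simp add: rowp_def coeff_sum eq_commute)

lemma coeff_rowp_idx: "coeff (rowp X k) (idx j0) = X$k$j0"
proof -
  have "\<And>j. (idx j = idx j0) = (j = j0)" using idx_inj[where 'n='n] by (auto dest: injD)
  then show ?thesis by (simp add: coeff_rowp)
qed

lemma degree_rowp: "degree (rowp X k) < CARD('n)"
proof -
  have "degree (rowp X k) \<le> CARD('n) - 1"
  proof (rule degree_le, intro allI impI)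
    fix e assume "CARD('n) - 1 < e"
    then have "\<And>j::'n. idx j \<noteq> e" using idx_lt[where 'n='n] by (metis Suc_pred' diff_less_Suc not_less_eq order.strict_trans zero_less_card_finite)
    then show "coeff (rowp X k) e = 0" by (simp add: coeff_rowp)
  qed
  then show ?thesis by (metis Suc_pred' le_imp_less_Suc zero_less_card_finite)
qed

lemma compan: "monom 1 (Suc (idx l)) - rowp C l \<in> A.I p"
proof (cases "idx l + 1 < CARD('n)")
  case True
  then have True': "Suc (idx l) < CARD('n)" by simp
  obtain j0 :: 'n where j0: "idx j0 = Suc (idx l)" using idx_surj True by auto
  have iff: "\<And>j. (idx j = Suc (idx l)) = (j = j0)" using j0 inj_eq[OF idx_inj[where 'n='n]] by metis
  have "rowp C l = (\<Sum>j\<in>UNIV. if j = j0 then monom 1 (Suc (idx l)) else 0)"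
    unfolding rowp_def by (rule sum.cong) (auto simp: Cdef companion_def True' iff j0)
  also have "\<dots> = monom 1 (Suc (idx l))" by simp
  finally show ?thesis by simp
next
  case False
  then have False': "\<not> Suc (idx l) < CARD('n)" by simp
  from False have n: "Suc (idx l) = CARD('n)" using idx_lt[of l] by simp
  have "rowp C l = (\<Sum>j\<in>(UNIV::'n set). monom (- coeff p (idx j)) (idx j))"
    unfolding rowp_def by (rule sum.cong) (auto simp: Cdef companion_def False')
  also have "\<dots> = (\<Sum>e<CARD('n). monom (- coeff p e) e)" by (rule sum_idx)
  finally have r: "rowp C l = - (\<Sum>e<CARD('n). monom (coeff p e) e)"
    by (simp add: minus_monom[symmetric] sum_negf)
  have "p = (\<Sum>e\<le>degree p. monom (coeff p e) e)" by (simp add: poly_as_sum_of_monoms)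
  also have "\<dots> = (\<Sum>e<CARD('n). monom (coeff p e) e) + monom 1 (CARD('n))"
    using monic deg by (simp add: lessThan_Suc_atMost[symmetric])
  finally have "monom 1 (Suc (idx l)) - rowp C l = p" using r n by (simp add: add.commute)
  then show ?thesis using A.I_self by simp
qed

lemma step_entry: "(entrywise \<sigma> N ** C + entrywise \<delta> N) $ k $ j = (\<Sum>l\<in>UNIV. \<sigma> (N$k$l) * C$l$j) + \<delta> (N$k$j)"
  by (simp add: matrix_matrix_mult_def entrywise_def)

lemma row_step: "A.T (rowp N k) - rowp (entrywise \<sigma> N ** C + entrywise \<delta> N) k
   = (\<Sum>l\<in>UNIV. A.sm (\<sigma> (N$k$l)) (monom 1 (Suc (idx l)) - rowp C l))"
proof -
  have a: "A.T (rowp N k) = (\<Sum>j\<in>UNIV. monom (\<sigma> (N$k$j)) (Suc (idx j))) + (\<Sum>j\<in>UNIV. monom (\<delta> (N$k$j)) (idx j))"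
    by (simp add: rowp_def A.T_sum T_monom sum.distrib)
  have b: "rowp (entrywise \<sigma> N ** C + entrywise \<delta> N) k
     = (\<Sum>l\<in>UNIV. \<Sum>j\<in>UNIV. monom (\<sigma> (N$k$l) * C$l$j) (idx j)) + (\<Sum>j\<in>UNIV. monom (\<delta> (N$k$j)) (idx j))"
  proof -
    have "rowp (entrywise \<sigma> N ** C + entrywise \<delta> N) k
     = (\<Sum>j\<in>UNIV. \<Sum>l\<in>UNIV. monom (\<sigma> (N$k$l) * C$l$j) (idx j)) + (\<Sum>j\<in>UNIV. monom (\<delta> (N$k$j)) (idx j))"
      by (simp add: rowp_def matrix_matrix_mult_def entrywise_def add_monom[symmetric] monom_sum sum.distrib)
    also have "(\<Sum>j\<in>UNIV. \<Sum>l\<in>UNIV. monom (\<sigma> (N$k$l) * C$l$j) (idx j))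
       = (\<Sum>l\<in>UNIV. \<Sum>j\<in>UNIV. monom (\<sigma> (N$k$l) * C$l$j) (idx j))"
      by (rule sum.swap)
    finally show ?thesis .
  qed
  have c: "(\<Sum>l\<in>UNIV. A.sm (\<sigma> (N$k$l)) (monom 1 (Suc (idx l)) - rowp C l))
     = (\<Sum>l\<in>UNIV. monom (\<sigma> (N$k$l)) (Suc (idx l))) - (\<Sum>l\<in>UNIV. \<Sum>j\<in>UNIV. monom (\<sigma> (N$k$l) * C$l$j) (idx j))"
    by (simp add: A.sm_diff A.sm_sum rowp_def sm_monom sum_subtractf)
  show ?thesis unfolding a b c by simp
qed

lemma rowN: "(A.T^^i) (monom 1 (idx k)) - rowp (MA.Nv C i) k \<in> A.I p"
proof (induction i)
  case 0
  have "rowp (mat 1) k = (\<Sum>j\<in>UNIV. if j = k then monom 1 (idx k) else 0)"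
    unfolding rowp_def by (rule sum.cong) (auto simp: mat_def)
  then show ?case by simp
next
  case (Suc i)
  define N where "N = MA.Nv C i"
  have "(A.T^^Suc i) (monom 1 (idx k)) - rowp (MA.Nv C (Suc i)) k
     = A.T ((A.T^^i) (monom 1 (idx k)) - rowp N k) + (A.T (rowp N k) - rowp (entrywise \<sigma> N ** C + entrywise \<delta> N) k)"
    by (simp add: N_def A.T_diff)
  also have "\<dots> \<in> A.I p"
  proof (rule A.I_add[OF A.I_T])
    show "(A.T^^i) (monom 1 (idx k)) - rowp N k \<in> A.I p" using Suc by (simp add: N_def)
    show "A.T (rowp N k) - rowp (entrywise \<sigma> N ** C + entrywise \<delta> N) k \<in> A.I p"
      unfolding row_step by (intro A.I_sum A.I_sm compan)
  qed
  finally show ?case .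
qed

abbreviation ev :: "'a poly \<Rightarrow> 'a^('n::{finite,linorder})^('n::{finite,linorder})" where "ev f \<equiv> ore_eval (**) (mat 1) (entrywise \<sigma>) (entrywise \<delta>) (map_poly mat f) C"

lemma evalC: "ev f = (\<Sum>i<Suc (degree f). mat (coeff f i) ** MA.Nv C i)"
proof -
  have "\<forall>i\<ge>Suc (degree f). coeff (map_poly mat f :: ('a^('n::{finite,linorder})^('n::{finite,linorder})) poly) i = 0"
    by (auto simp: coeff_map_poly coeff_eq_0)
  from MA.eval_formula[OF this] show ?thesis by (simp add: coeff_map_poly)
qed

lemma rowf: "A.M f (monom 1 (idx k)) - rowp (ev f) k \<in> A.I p"
proof -
  define m where "m = Suc (degree f)"
  have e1: "A.M f (monom 1 (idx k)) = (\<Sum>i<m. A.sm (coeff f i) ((A.T^^i) (monom 1 (idx k))))"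
    by (rule A.rep) (simp add: m_def)
  have e2: "rowp (ev f) k = (\<Sum>i<m. A.sm (coeff f i) (rowp (MA.Nv C i) k))"
  proof -
    have "rowp (ev f) k = (\<Sum>j\<in>UNIV. \<Sum>i<m. monom (coeff f i * MA.Nv C i $ k $ j) (idx j))"
      unfolding evalC m_def[symmetric]
      by (simp add: rowp_def sum_component mat_mul_entry monom_sum)
    also have "\<dots> = (\<Sum>i<m. \<Sum>j\<in>UNIV. monom (coeff f i * MA.Nv C i $ k $ j) (idx j))"
      by (rule sum.swap)
    also have "\<dots> = (\<Sum>i<m. A.sm (coeff f i) (rowp (MA.Nv C i) k))"
      by (simp add: rowp_def A.sm_sum sm_monom)
    finally show ?thesis .
  qed
  have "A.M f (monom 1 (idx k)) - rowp (ev f) k = (\<Sum>i<m. A.sm (coeff f i) ((A.T^^i) (monom 1 (idx k)) - rowp (MA.Nv C i) k))"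
    unfolding e1 e2 by (simp add: A.sm_diff sum_subtractf)
  also have "\<dots> \<in> A.I p" by (intro A.I_sum A.I_sm rowN)
  finally show ?thesis .
qed

lemma EV: "ev f = 0 \<longleftrightarrow> (\<forall>e<CARD('n). A.M f (monom 1 e) \<in> A.I p)"
proof
  assume z: "ev f = 0"
  show "\<forall>e<CARD('n). A.M f (monom 1 e) \<in> A.I p"
  proof (intro allI impI)
    fix e assume "e < CARD('n)"
    then obtain k :: 'n where k: "idx k = e" using idx_surj by blast
    have "rowp 0 k = 0" by (simp add: rowp_def)
    then show "A.M f (monom 1 e) \<in> A.I p" using rowf[of f k] z k by simp
  qed
next
  assume h: "\<forall>e<CARD('n). A.M f (monom 1 e) \<in> A.I p"
  have "rowp (ev f) k = 0" for k
  proof -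
    have m: "A.M f (monom 1 (idx k)) \<in> A.I p" using h idx_lt by auto
    have "rowp (ev f) k = A.M f (monom 1 (idx k)) - (A.M f (monom 1 (idx k)) - rowp (ev f) k)" by simp
    also have "\<dots> \<in> A.I p" by (rule A.I_diff[OF m rowf])
    finally have r: "rowp (ev f) k \<in> A.I p" .
    have "degree (rowp (ev f) k) < degree p" using deg degree_rowp by simp
    then show ?thesis using A.small_zero[OF monic r] by simp
  qed
  then have "ev f $ k $ j = 0" for k j using coeff_rowp_idx[of "ev f" k j] by simp
  then show "ev f = 0" by (simp add: vec_eq_iff)
qed


lemma M_monom0: "A.M f (monom 1 0) = f"
  by (simp add: monom_0 A.M_one_r)

lemma M_monom_Suc: "A.M f (monom 1 (Suc e)) = A.M (A.M f (monom 1 e)) [:0,1:]"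
proof -
  have "monom 1 (Suc e) = A.M (monom 1 e) [:0,1:]" using A.M_t_r[of "monom 1 e"] by (simp add: monom_Suc)
  then show ?thesis by (simp add: A.M_assoc)
qed

lemma i_all: assumes "A.M p [:0,1:] \<in> A.I p" shows "A.M p (monom 1 e) \<in> A.I p"
proof (induction e)
  case 0 then show ?case by (simp add: M_monom0 A.I_self)
next
  case (Suc e)
  then obtain q where q: "A.M p (monom 1 e) = A.M q p" using A.I_iff by blast
  have "A.M p (monom 1 (Suc e)) = A.M q (A.M p [:0,1:])" by (simp add: M_monom_Suc q A.M_assoc)
  then show ?case using A.I_M[OF assms] by simp
qed

lemma main: assumes n1: "CARD('n) > 1"
  shows "(A.M p [:0,1:] \<in> A.I p \<longleftrightarrow> (\<forall>f. f \<in> A.I p \<longleftrightarrow> ev f = 0))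
    \<and> ((\<forall>f. f \<in> A.I p \<longleftrightarrow> ev f = 0) \<longleftrightarrow> ev p = 0)"
proof -
  have i_ii: "(\<forall>f. f \<in> A.I p \<longleftrightarrow> ev f = 0)" if i: "A.M p [:0,1:] \<in> A.I p"
  proof (intro allI iffI)
    fix f assume "f \<in> A.I p"
    then obtain q where q: "f = A.M q p" using A.I_iff by blast
    have "A.M f (monom 1 e) \<in> A.I p" for e
      using A.I_M[OF i_all[OF i, of e], of q] by (simp add: q A.M_assoc)
    then show "ev f = 0" using EV by blast
  next
    fix f assume "ev f = 0"
    then have "A.M f (monom 1 0) \<in> A.I p" using EV n1 by auto
    then show "f \<in> A.I p" by (simp add: M_monom0)
  qed
  have ii_iii: "ev p = 0" if "\<forall>f. f \<in> A.I p \<longleftrightarrow> ev f = 0" using that A.I_self by blast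
  have iii_i: "A.M p [:0,1:] \<in> A.I p" if "ev p = 0"
  proof -
    have "A.M p (monom 1 1) \<in> A.I p" using that EV n1 by auto
    moreover have "monom (1::'a) 1 = [:0,1:]" by (simp add: monom_Suc monom_0)
    ultimately show ?thesis by simp
  qed
  show ?thesis using i_ii ii_iii iii_i by blast
qed

end

theorem corollary1p12:
  fixes \<sigma> \<delta> :: "'a::ring_1 \<Rightarrow> 'a" and p :: "'a poly"
  assumes sigma_one: "\<sigma> 1 = 1"
      and sigma_add: "\<And>x y. \<sigma> (x + y) = \<sigma> x + \<sigma> y"
      and sigma_mult: "\<And>x y. \<sigma> (x * y) = \<sigma> x * \<sigma> y"
      and delta_add: "\<And>x y. \<delta> (x + y) = \<delta> x + \<delta> y"
      and delta_mult: "\<And>x y. \<delta> (x * y) = \<sigma> x * \<delta> y + \<delta> x * y"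
      and monic: "lead_coeff p = 1"
      and deg: "degree p = CARD('n::{finite,linorder})"
      and deg_gt1: "CARD('n::{finite,linorder}) > 1"
  shows "([:0, 1:] \<in> ore_Idl (*) \<sigma> \<delta> p
          \<longleftrightarrow> (\<forall>f. f \<in> ore_left_ideal (*) \<sigma> \<delta> p \<longleftrightarrow>
                 ore_eval (**) (mat 1) (entrywise \<sigma>) (entrywise \<delta>) (map_poly mat f)
                   (companion p :: 'a^('n::{finite,linorder})^('n::{finite,linorder})) = 0))
       \<and> ((\<forall>f. f \<in> ore_left_ideal (*) \<sigma> \<delta> p \<longleftrightarrow>
                 ore_eval (**) (mat 1) (entrywise \<sigma>) (entrywise \<delta>) (map_poly mat f)
                   (companion p :: 'a^('n::{finite,linorder})^('n::{finite,linorder})) = 0)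
          \<longleftrightarrow> ore_eval (**) (mat 1) (entrywise \<sigma>) (entrywise \<delta>) (map_poly mat p)
                   (companion p :: 'a^('n::{finite,linorder})^('n::{finite,linorder})) = 0)"
proof -
  have o: "ore (*) (1::'a) \<sigma> \<delta>"
    by (rule ore_A) (use assms in auto)
  interpret cs \<sigma> \<delta> p "companion p :: 'a^('n::{finite,linorder})^('n::{finite,linorder})"
    using o monic deg unfolding cs_def by simp
  show ?thesis using main[OF deg_gt1] by (simp add: ore_Idl_def)
qed


end
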